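(* Let $X$ be a set and $\tau$ a Hausdorff topology on $I(X)$ making it a topological inverse semigroup. Then the map $2^X\to(I(X),\tau)$, $A\mapsto 1_A$, is continuous if and only if the set of idempotents $\{1_A: A\subseteq X\}$ of $I(X)$ is $\tau$-compact.
   Context: $I(X)$ is the set of all bijections $f:A\to B$ with $A,B\subseteq X$ (including the empty map), with composition $\mathrm{dom}(f\circ g)=g^{-1}(\mathrm{dom}(f)\cap\mathrm{im}(g))$, $(f\circ g)(x)=f(g(x))$ and inverse $f^{-1}$. $1_A$ denotes the identity map on $A\subseteq X$; these are exactly the idempotents of $I(X)$. $2^X$ is the power set of $X$ with the product topology (identified with $\{0,1\}^X$). A topological inverse semigroup is one where multiplication and inversion are continuous. *)

theory Defs
  imports "HOL-Analysis.Analysis"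
begin

text \<open>The symmetric inverse monoid I(X): partial bijections between subsets of X,
  represented as partial maps (type 'a \<rightharpoonup> 'a) injective on their domain.\<close>
definition sym_inv :: "'a set \<Rightarrow> ('a \<rightharpoonup> 'a) set" where
  "sym_inv X = {f. inj_on f (dom f) \<and> dom f \<subseteq> X \<and> ran f \<subseteq> X}"

definition pcomp :: "('a \<rightharpoonup> 'a) \<Rightarrow> ('a \<rightharpoonup> 'a) \<Rightarrow> ('a \<rightharpoonup> 'a)" where
  "pcomp f g = f \<circ>\<^sub>m g"

definition pinv :: "('a \<rightharpoonup> 'a) \<Rightarrow> ('a \<rightharpoonup> 'a)" where
  "pinv f = (\<lambda>y. if y \<in> ran f then Some (THE x. f x = Some y) else None)"

definition pid :: "'a set \<Rightarrow> ('a \<rightharpoonup> 'a)" where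
  "pid A = (\<lambda>x. if x \<in> A then Some x else None)"

definition top_inv_semigroup_on :: "'a set \<Rightarrow> ('a \<rightharpoonup> 'a) topology \<Rightarrow> bool" where
  "top_inv_semigroup_on X \<tau> \<longleftrightarrow>
     topspace \<tau> = sym_inv X \<and>
     continuous_map (prod_topology \<tau> \<tau>) \<tau> (\<lambda>(f, g). pcomp f g) \<and>
     continuous_map \<tau> \<tau> pinv"

text \<open>The Cantor cube 2^X = {0,1}^X with the product topology; a point is a
  characteristic function X \<rightarrow> bool, corresponding to the subset {x \<in> X. g x}.\<close>
definition cantor_cube :: "'a set \<Rightarrow> ('a \<Rightarrow> bool) topology" where
  "cantor_cube X = product_topology (\<lambda>_. discrete_topology (UNIV :: bool set)) X"

end

theory Submission
  imports Defs
begin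

lemma pid_in: "A \<subseteq> X \<Longrightarrow> pid A \<in> sym_inv X"
  unfolding sym_inv_def pid_def
  by (auto simp: inj_on_def dom_def ran_def split: if_splits)

lemma pcomp_pid: "pcomp (pid A) (pid B) = pid (A \<inter> B)"
  unfolding pcomp_def pid_def by (auto simp: fun_eq_iff map_comp_def)

lemma pid_inj: "pid A = pid B \<Longrightarrow> A = B"
  unfolding pid_def by (auto simp: fun_eq_iff split: if_splits)

lemma pid_eq_iff: "pid A = pid B \<longleftrightarrow> A = B"
  using pid_inj by blast

lemma pid_app: "pid A x \<noteq> None \<longleftrightarrow> x \<in> A"
  by (simp add: pid_def)

lemma restr_set: "A \<subseteq> X \<Longrightarrow> {x \<in> X. restrict (\<lambda>x. x \<in> A) X x} = A"
  by auto

lemma mult_closed: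
  assumes H: "Hausdorff_space \<tau>" and T: "top_inv_semigroup_on X \<tau>"
    and c: "c \<in> topspace \<tau>" and d: "d \<in> topspace \<tau>"
  shows "closedin \<tau> {f \<in> topspace \<tau>. pcomp f c = d}"
proof -
  have "continuous_map \<tau> \<tau> (\<lambda>f. pcomp f c)"
  proof -
    have "continuous_map \<tau> (prod_topology \<tau> \<tau>) (\<lambda>f. (f, c))"
      using c by (intro continuous_map_pairedI) auto
    then have "continuous_map \<tau> \<tau> ((\<lambda>(f, g). pcomp f g) \<circ> (\<lambda>f. (f, c)))"
      using T unfolding top_inv_semigroup_on_def by (meson continuous_map_compose)
    then show ?thesis by (simp add: o_def)
  qed
  moreover have "closedin \<tau> {d}" using H d by (rule closedin_Hausdorff_singleton)
  ultimately show ?thesis using closedin_continuous_map_preimage by fastforce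
qed

theorem theorem3p5:
  fixes X :: "'a set" and \<tau> :: "('a \<rightharpoonup> 'a) topology"
  assumes "Hausdorff_space \<tau>"
    and "top_inv_semigroup_on X \<tau>"
  shows "continuous_map (cantor_cube X) \<tau> (\<lambda>g. pid {x \<in> X. g x})
         \<longleftrightarrow> compactin \<tau> {pid A | A. A \<subseteq> X}"
proof -
  define E where "E = {pid A | A. A \<subseteq> X}"
  define \<phi> where "\<phi> = (\<lambda>g. pid {x \<in> X. g x})"
  define \<psi> where "\<psi> = (\<lambda>e::'a \<rightharpoonup> 'a. restrict (\<lambda>x. e x \<noteq> None) X)"
  have topK: "topspace (cantor_cube X) = (\<Pi>\<^sub>E i\<in>X. UNIV)"
    by (simp add: cantor_cube_def)
  have ts: "topspace \<tau> = sym_inv X" using assms(2) by (simp add: top_inv_semigroup_on_def)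
  have imgE: "\<phi> ` topspace (cantor_cube X) = E"
  proof
    show "\<phi> ` topspace (cantor_cube X) \<subseteq> E" unfolding \<phi>_def E_def by auto
    show "E \<subseteq> \<phi> ` topspace (cantor_cube X)"
    proof
      fix e assume "e \<in> E"
      then obtain A where A: "A \<subseteq> X" "e = pid A" unfolding E_def by auto
      have "restrict (\<lambda>x. x \<in> A) X \<in> topspace (cantor_cube X)" using topK by auto
      moreover have "e = \<phi> (restrict (\<lambda>x. x \<in> A) X)"
        unfolding \<phi>_def restr_set[OF A(1)] by (rule A(2))
      ultimately show "e \<in> \<phi> ` topspace (cantor_cube X)" by blast
    qed
  qed
  have ES: "E \<subseteq> topspace \<tau>" unfolding E_def ts using pid_in by auto
  show ?thesis
    unfolding E_def[symmetric] \<phi>_def[symmetric]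
  proof
    assume "continuous_map (cantor_cube X) \<tau> \<phi>"
    moreover have "compactin (cantor_cube X) (topspace (cantor_cube X))"
      unfolding cantor_cube_def compact_space_def[symmetric]
      by (simp add: compact_space_product_topology compact_space_discrete_topology)
    ultimately show "compactin \<tau> E" using image_compactin imgE by metis
  next
    assume cE: "compactin \<tau> E"
    have HK: "Hausdorff_space (cantor_cube X)"
      unfolding cantor_cube_def by (simp add: Hausdorff_space_product_topology)
    have psi_pid: "\<psi> (pid A) = restrict (\<lambda>x. x \<in> A) X" for A
      unfolding \<psi>_def pid_def by auto
    have clU: "closedin (subtopology \<tau> E) {e \<in> E. (e x \<noteq> None) = b}" if x: "x \<in> X" for x b
    proof -
      have px: "pid {x} \<in> topspace \<tau>" using x ts pid_in[of "{x}" X] pid_in[of "{}" X] by auto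
      define d where "d = (if b then pid {x} else pid {})"
      have dt: "d \<in> topspace \<tau>" unfolding d_def using x ts pid_in[of "{x}" X] pid_in[of "{}" X] by auto
      have cl: "closedin (subtopology \<tau> E) (E \<inter> {f \<in> topspace \<tau>. pcomp f (pid {x}) = d})"
        by (rule closedin_subtopology_Int_closed, rule mult_closed[OF assms px dt])
      have eq: "E \<inter> {f \<in> topspace \<tau>. pcomp f (pid {x}) = d} = {e \<in> E. (e x \<noteq> None) = b}"
      proof -
        have "pcomp (pid A) (pid {x}) = d \<longleftrightarrow> (pid A x \<noteq> None) = b" for A
        proof -
          have "(pcomp (pid A) (pid {x}) = d) = ((x \<in> A) = b)"
          proof (cases b)
              case True
              have "(pid (A \<inter> {x}) = pid {x}) = (A \<inter> {x} = {x})" by (rule pid_eq_iff)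
              also have "\<dots> = (x \<in> A)" by blast
              finally show ?thesis using True unfolding pcomp_pid d_def by simp
            next
              case False
              have "(pid (A \<inter> {x}) = pid {}) = (A \<inter> {x} = {})" by (rule pid_eq_iff)
              also have "\<dots> = (x \<notin> A)" by blast
              finally show ?thesis using False unfolding pcomp_pid d_def by simp
            qed
          then show ?thesis by (simp only: pid_app)
        qed
        note key = this
        show ?thesis
        proof (rule set_eqI)
          fix e
          show "e \<in> E \<inter> {f \<in> topspace \<tau>. pcomp f (pid {x}) = d} \<longleftrightarrow> e \<in> {e \<in> E. (e x \<noteq> None) = b}"
          proof (cases "e \<in> E")
            case True
            then obtain A where eA: "e = pid A" unfolding E_def by blast
            have "e \<in> topspace \<tau>" using True ES by blast
            then show ?thesis using True key[of A] unfolding eA by simp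
          qed simp
        qed
      qed
      show ?thesis using cl unfolding eq .
    qed
    have cpsi: "continuous_map (subtopology \<tau> E) (cantor_cube X) \<psi>"
      unfolding cantor_cube_def continuous_map_componentwise
    proof
      show "\<psi> ` topspace (subtopology \<tau> E) \<subseteq> extensional X" unfolding \<psi>_def by auto
      show "\<forall>k\<in>X. continuous_map (subtopology \<tau> E) (discrete_topology UNIV) (\<lambda>x. \<psi> x k)"
      proof
        fix k assume k: "k \<in> X"
        show "continuous_map (subtopology \<tau> E) (discrete_topology UNIV) (\<lambda>x. \<psi> x k)"
          unfolding continuous_map_closedin
        proof (intro conjI allI impI)
          show "(\<lambda>x. \<psi> x k) \<in> topspace (subtopology \<tau> E) \<rightarrow> topspace (discrete_topology UNIV)" by simp
          fix C :: "bool set"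
          have tE: "topspace (subtopology \<tau> E) = E" using ES by auto
          have eq: "{x \<in> topspace (subtopology \<tau> E). \<psi> x k \<in> C} =
                    (if True \<in> C then {e \<in> E. (e k \<noteq> None) = True} else {}) \<union>
                    (if False \<in> C then {e \<in> E. (e k \<noteq> None) = False} else {})"
          proof (rule set_eqI)
            fix e
            show "e \<in> {x \<in> topspace (subtopology \<tau> E). \<psi> x k \<in> C} \<longleftrightarrow> e \<in> (if True \<in> C then {e \<in> E. (e k \<noteq> None) = True} else {}) \<union>
                    (if False \<in> C then {e \<in> E. (e k \<noteq> None) = False} else {})"
              unfolding tE \<psi>_def using k
              by (cases "True \<in> C"; cases "False \<in> C"; cases "e k = None") auto
          qed
          show "closedin (subtopology \<tau> E) {x \<in> topspace (subtopology \<tau> E). \<psi> x k \<in> C}"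
            unfolding eq
          proof -
            have c1: "closedin (subtopology \<tau> E) {e \<in> E. \<exists>y. e k = Some y}" using clU[OF k, of True] by simp
            have c0: "closedin (subtopology \<tau> E) {e \<in> E. e k = None}" using clU[OF k, of False] by simp
            have c3: "closedin (subtopology \<tau> E) {}" by (rule closedin_empty)
            show "closedin (subtopology \<tau> E) ((if True \<in> C then {e \<in> E. (e k \<noteq> None) = True} else {}) \<union>
                    (if False \<in> C then {e \<in> E. (e k \<noteq> None) = False} else {}))"
              by (intro closedin_Un) (simp_all add: c1 c0 c3)
          qed
        qed
      qed
    qed
    have cm: "closed_map (subtopology \<tau> E) (cantor_cube X) \<psi>"
      by (rule continuous_imp_closed_map[OF cpsi compact_space_subtopology[OF cE] HK])
    have phiE: "\<phi> g \<in> E" if "g \<in> topspace (cantor_cube X)" for g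
    proof -
      have "\<phi> g \<in> \<phi> ` topspace (cantor_cube X)" using that by (rule imageI)
      then show ?thesis unfolding imgE .
    qed
    have psiphi: "\<psi> (\<phi> g) = g" if g: "g \<in> topspace (cantor_cube X)" for g
    proof
      fix y
      show "\<psi> (\<phi> g) y = g y"
      proof (cases "y \<in> X")
        case True then show ?thesis unfolding \<phi>_def psi_pid by simp
      next
        case False
        have "g \<in> extensional X" using g topK by (simp add: PiE_def)
        then show ?thesis using False unfolding \<phi>_def psi_pid by (simp add: extensional_def)
      qed
    qed
    show "continuous_map (cantor_cube X) \<tau> \<phi>"
      unfolding continuous_map_closedin
    proof (intro conjI allI impI)
      show "\<phi> \<in> topspace (cantor_cube X) \<rightarrow> topspace \<tau>"
      proof
        fix g assume "g \<in> topspace (cantor_cube X)"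
        then have "\<phi> g \<in> E" by (rule phiE)
        then show "\<phi> g \<in> topspace \<tau>" using ES by (rule subsetD[rotated])
      qed
      fix C assume C: "closedin \<tau> C"
      have eqC: "{x \<in> topspace (cantor_cube X). \<phi> x \<in> C} = \<psi> ` (C \<inter> E)"
      proof
        show "{x \<in> topspace (cantor_cube X). \<phi> x \<in> C} \<subseteq> \<psi> ` (C \<inter> E)"
        proof
          fix g assume g: "g \<in> {x \<in> topspace (cantor_cube X). \<phi> x \<in> C}"
          then have g1: "g \<in> topspace (cantor_cube X)" and g2: "\<phi> g \<in> C" by simp_all
          have "\<phi> g \<in> C \<inter> E" using g2 phiE[OF g1] by (rule IntI)
          then have "\<psi> (\<phi> g) \<in> \<psi> ` (C \<inter> E)" by (rule imageI)
          then show "g \<in> \<psi> ` (C \<inter> E)" unfolding psiphi[OF g1] .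
        qed
        show "\<psi> ` (C \<inter> E) \<subseteq> {x \<in> topspace (cantor_cube X). \<phi> x \<in> C}"
        proof
          fix g assume "g \<in> \<psi> ` (C \<inter> E)"
          then obtain e where e: "e \<in> C" "e \<in> E" "g = \<psi> e" by blast
          then obtain A where A: "A \<subseteq> X" "e = pid A" unfolding E_def by blast
          have "\<phi> g = pid A" unfolding e(3) A(2) psi_pid \<phi>_def restr_set[OF A(1)] ..
          moreover have "g \<in> topspace (cantor_cube X)" unfolding topK e(3) A(2) psi_pid by simp
          ultimately show "g \<in> {x \<in> topspace (cantor_cube X). \<phi> x \<in> C}" using e A by simp
        qed
      qed
      have "closedin (subtopology \<tau> E) (E \<inter> C)"
        by (rule closedin_subtopology_Int_closed[OF C])
      then have "closedin (subtopology \<tau> E) (C \<inter> E)" by (simp only: Int_commute)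
      then have "closedin (cantor_cube X) (\<psi> ` (C \<inter> E))"
        using cm unfolding closed_map_def by blast
      then show "closedin (cantor_cube X) {x \<in> topspace (cantor_cube X). \<phi> x \<in> C}"
        unfolding eqC .
    qed
  qed
qed

end
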